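(* Let $D$ be any digraph and $P$ an admissible partition of $V(D)$. Then the map $\hat\varphi_P\colon|D|\to D/P$ is continuous.
   Context: Digraphs have no loops and no parallel edges. $\mathcal{X}(D)$: finite subsets of $V(D)$. A vertex set $Y$ separates vertex sets $A,B$ if every $A$–$B$ path meets $Y$ or every $B$–$A$ path meets $Y$. A finite partition $P$ of $V(D)$ is admissible if any two distinct classes are separated by a finite vertex set. $D/P$ is the finite multi-digraph on vertex set $P$ where for distinct $p_1,p_2\in P$ there is one edge $(e,p_1,p_2)$ for each edge $e$ of $D$ from $p_1$ to $p_2$ if there are finitely many such edges, and a single quotient edge $(p_1p_2,p_1,p_2)$ if there are infinitely many; $D/P$ carries the 1-complex topology (edges are copies of $[0,1]$ glued at endvertices; basic open sets are open stars around vertices and open subintervals of edges). Ends and limit edges: a ray is a one-way infinite directed path, its tails are its subrays; a ray is solid if for every $X\in\mathcal{X}(D)$ it has a tail in a strong component of $D-X$; solid rays are equivalent if for every $X$ they have tails in the same strong component of $D-X$; classes are ends, $\Omega(D)$. $C(X,\omega)$ is the strong component of $D-X$ containing tails of rays of $\omega$ ($\omega$ lives in it); $X$ separates ends $\omega,\eta$ if $C(X,\omega)\ne C(X,\eta)$. For distinct ends, $(\omega,\eta)$ is a limit edge if for every $X$ separating them $D$ has an edge from $C(X,\omega)$ to $C(X,\eta)$; for a vertex $v$, $(v,\omega)$ (resp. $(\omega,v)$) is a limit edge if $D$ has an edge from $v$ to $C(X,\omega)$ (resp. from $C(X,\omega)$ to $v$) for all $X$ with $v\notin C(X,\omega)$.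 $\Lambda(D)$: the limit edges. $|D|$: from $V(D)\cup\Omega(D)$ and copies $[0,1]_e$, $e\in E(D)\cup\Lambda(D)$, identify tail of $e$ with $0$ and head with $1$; points on different edges correspond if they come from the same real. A limit edge lives in a strong component $C$ of $D-X$ if each endpoint is a vertex of or an end living in $C$. Topology generated by: (1) open $\varepsilon$-stars around vertices $v$ ($[0,\varepsilon)$ of edges in $E(D)\cup\Lambda(D)$ with tail $v$, $(1-\varepsilon,1]$ of those with head $v$); (2) open subintervals of interiors of edges of $D$; (3) for an end $\omega$ and $X\in\mathcal{X}(D)$, $\hat C_\varepsilon(X,\omega)$: vertices and inner points of edges of $C(X,\omega)$, ends living in $C(X,\omega)$, points of limit edges living in $C(X,\omega)$, and for each edge of $E(D)\cup\Lambda(D)$ with exactly one endpoint $y$ a vertex of/end living in $C(X,\omega)$, the half-open segment of length $\varepsilon$ at $y$; (4) for an inner point $z$ of a limit edge $(\omega,\eta)$ and $X$ separating $\omega,\eta$: union of open $\varepsilon$-intervals around points corresponding to $z$ on all edges of $D$ from $C(X,\omega)$ to $C(X,\eta)$ and on limit edges with tail a vertex of/end living in $C(X,\omega)$ and head a vertex of/end living in $C(X,\eta)$; for $(v,\omega)$ with $v\in X$, analogously over edges of $D$ from $v$ to $C(X,\omega)$ and limit edges $(v,\omega')$ with $\omega'$ living in $C(X,\omega)$; symmetrically for $(\omega,v)$. $\hat\varphi_P\colon|D|\to D/P$: a vertex $v$ goes to its class; an inner point $z$ of an edge $vw$ of $D$ goes to the class of $v$ if $v,w$ lie in the same class, else to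 the corresponding point of the edge of $D/P$ from the class of $v$ to the class of $w$ (the copy of $vw$ or the quotient edge); an end $\omega$ goes to the unique class containing tails of all rays of $\omega$; an inner point $z$ of a limit edge $\lambda$ goes to the common image of the endpoints of $\lambda$ if these coincide, and otherwise (then $D$ has infinitely many edges between the two classes in the direction of $\lambda$, so $D/P$ has a quotient edge between them) to the corresponding point of that quotient edge. *)

theory Defs
  imports "HOL-Analysis.Analysis"
begin

definition digraph :: "'v set \<Rightarrow> ('v \<times> 'v) set \<Rightarrow> bool" where
  "digraph V E \<longleftrightarrow> E \<subseteq> V \<times> V \<and> (\<forall>(u,w)\<in>E. u \<noteq> w)"

definition fsets :: "'v set \<Rightarrow> 'v set set" where
  "fsets V = {X. finite X \<and> X \<subseteq> V}"

definition reach_in :: "'v set \<Rightarrow> ('v \<times> 'v) set \<Rightarrow> 'v \<Rightarrow> 'v \<Rightarrow> bool" where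
  "reach_in S E a b \<longleftrightarrow> a \<in> S \<and> b \<in> S \<and> (a, b) \<in> (E \<inter> S \<times> S)\<^sup>*"

definition separates :: "'v set \<Rightarrow> ('v \<times> 'v) set \<Rightarrow> 'v set \<Rightarrow> 'v set \<Rightarrow> 'v set \<Rightarrow> bool" where
  "separates V E Y A B \<longleftrightarrow>
     (\<forall>a\<in>A. \<forall>b\<in>B. \<not> reach_in (V - Y) E a b) \<or> (\<forall>a\<in>A. \<forall>b\<in>B. \<not> reach_in (V - Y) E b a)"

definition admissible :: "'v set \<Rightarrow> ('v \<times> 'v) set \<Rightarrow> 'v set set \<Rightarrow> bool" where
  "admissible V E P \<longleftrightarrow> finite P \<and> \<Union>P = V \<and> {} \<notin> P
     \<and> (\<forall>p\<in>P. \<forall>q\<in>P. p \<noteq> q \<longrightarrow> p \<inter> q = {})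
     \<and> (\<forall>p\<in>P. \<forall>q\<in>P. p \<noteq> q \<longrightarrow> (\<exists>Y\<in>fsets V. separates V E Y p q))"

definition scomps :: "'v set \<Rightarrow> ('v \<times> 'v) set \<Rightarrow> 'v set \<Rightarrow> 'v set set" where
  "scomps V E X = (\<lambda>v. {w. reach_in (V - X) E v w \<and> reach_in (V - X) E w v}) ` (V - X)"

definition is_ray :: "'v set \<Rightarrow> ('v \<times> 'v) set \<Rightarrow> (nat \<Rightarrow> 'v) \<Rightarrow> bool" where
  "is_ray V E R \<longleftrightarrow> inj R \<and> (\<forall>i. R i \<in> V) \<and> (\<forall>i. (R i, R (Suc i)) \<in> E)"

definition tail_in :: "(nat \<Rightarrow> 'v) \<Rightarrow> 'v set \<Rightarrow> bool" where
  "tail_in R C \<longleftrightarrow> (\<exists>k. \<forall>i\<ge>k. R i \<in> C)"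

definition solid :: "'v set \<Rightarrow> ('v \<times> 'v) set \<Rightarrow> (nat \<Rightarrow> 'v) \<Rightarrow> bool" where
  "solid V E R \<longleftrightarrow> is_ray V E R \<and> (\<forall>X\<in>fsets V. \<exists>C\<in>scomps V E X. tail_in R C)"

definition ray_equiv :: "'v set \<Rightarrow> ('v \<times> 'v) set \<Rightarrow> (nat \<Rightarrow> 'v) \<Rightarrow> (nat \<Rightarrow> 'v) \<Rightarrow> bool" where
  "ray_equiv V E R S \<longleftrightarrow> (\<forall>X\<in>fsets V. \<exists>C\<in>scomps V E X. tail_in R C \<and> tail_in S C)"

definition ends :: "'v set \<Rightarrow> ('v \<times> 'v) set \<Rightarrow> (nat \<Rightarrow> 'v) set set" where
  "ends V E = {{S. solid V E S \<and> ray_equiv V E R S} | R. solid V E R}"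

definition compE :: "'v set \<Rightarrow> ('v \<times> 'v) set \<Rightarrow> 'v set \<Rightarrow> (nat \<Rightarrow> 'v) set \<Rightarrow> 'v set" where
  "compE V E X \<omega> = (THE C. C \<in> scomps V E X \<and> (\<forall>R\<in>\<omega>. tail_in R C))"

datatype 'v node = NV 'v | NE "(nat \<Rightarrow> 'v) set"

definition nodes :: "'v set \<Rightarrow> ('v \<times> 'v) set \<Rightarrow> 'v node set" where
  "nodes V E = NV ` V \<union> NE ` ends V E"

definition limit_edges :: "'v set \<Rightarrow> ('v \<times> 'v) set \<Rightarrow> ('v node \<times> 'v node) set" where
  "limit_edges V E =
     {(NE \<omega>, NE \<eta>) | \<omega> \<eta>. \<omega> \<in> ends V E \<and> \<eta> \<in> ends V E \<and> \<omega> \<noteq> \<eta> \<and>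
        (\<forall>X\<in>fsets V. compE V E X \<omega> \<noteq> compE V E X \<eta> \<longrightarrow>
           (\<exists>(a,b)\<in>E. a \<in> compE V E X \<omega> \<and> b \<in> compE V E X \<eta>))}
   \<union> {(NV v, NE \<omega>) | v \<omega>. v \<in> V \<and> \<omega> \<in> ends V E \<and>
        (\<forall>X\<in>fsets V. v \<notin> compE V E X \<omega> \<longrightarrow> (\<exists>b. (v,b) \<in> E \<and> b \<in> compE V E X \<omega>))}
   \<union> {(NE \<omega>, NV v) | v \<omega>. v \<in> V \<and> \<omega> \<in> ends V E \<and>
        (\<forall>X\<in>fsets V. v \<notin> compE V E X \<omega> \<longrightarrow> (\<exists>a. (a,v) \<in> E \<and> a \<in> compE V E X \<omega>))}"

definition all_edges :: "'v set \<Rightarrow> ('v \<times> 'v) set \<Rightarrow> ('v node \<times> 'v node) set" where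
  "all_edges V E = {(NV u, NV w) | u w. (u,w) \<in> E} \<union> limit_edges V E"

definition node_in :: "'v set \<Rightarrow> ('v \<times> 'v) set \<Rightarrow> 'v set \<Rightarrow> 'v set \<Rightarrow> 'v node \<Rightarrow> bool" where
  "node_in V E X C x = (case x of NV v \<Rightarrow> v \<in> C | NE \<eta> \<Rightarrow> \<eta> \<in> ends V E \<and> compE V E X \<eta> = C)"

text \<open>Points: nodes, and inner points (e, t), 0 < t < 1, of edges e of E(D) \<union> Lambda(D);
  the tail of e is identified with 0 and the head with 1.\<close>
datatype 'v pt = Node "'v node" | Inner "'v node \<times> 'v node" real

definition DPoints :: "'v set \<Rightarrow> ('v \<times> 'v) set \<Rightarrow> 'v pt set" where
  "DPoints V E = Node ` nodes V E \<union> {Inner e t | e t. e \<in> all_edges V E \<and> 0 < t \<and> t < 1}"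

definition vstar :: "'v set \<Rightarrow> ('v \<times> 'v) set \<Rightarrow> 'v \<Rightarrow> real \<Rightarrow> 'v pt set" where
  "vstar V E v \<epsilon> = {Node (NV v)}
     \<union> {Inner e t | e t. e \<in> all_edges V E \<and> fst e = NV v \<and> 0 < t \<and> t < \<epsilon>}
     \<union> {Inner e t | e t. e \<in> all_edges V E \<and> snd e = NV v \<and> 1 - \<epsilon> < t \<and> t < 1}"

definition hatC :: "'v set \<Rightarrow> ('v \<times> 'v) set \<Rightarrow> 'v set \<Rightarrow> (nat \<Rightarrow> 'v) set \<Rightarrow> real \<Rightarrow> 'v pt set" where
  "hatC V E X \<omega> \<epsilon> = (let C = compE V E X \<omega>; inC = node_in V E X C in
       {Node x | x. x \<in> nodes V E \<and> inC x}
     \<union> {Inner e t | e t. e \<in> all_edges V E \<and> inC (fst e) \<and> inC (snd e) \<and> 0 < t \<and> t < 1}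
     \<union> {Inner e t | e t. e \<in> all_edges V E \<and> inC (fst e) \<and> \<not> inC (snd e) \<and> 0 < t \<and> t < \<epsilon>}
     \<union> {Inner e t | e t. e \<in> all_edges V E \<and> \<not> inC (fst e) \<and> inC (snd e) \<and> 1 - \<epsilon> < t \<and> t < 1})"

definition band :: "'v set \<Rightarrow> ('v \<times> 'v) set \<Rightarrow> ('v node \<Rightarrow> bool) \<Rightarrow> ('v node \<Rightarrow> bool) \<Rightarrow> real \<Rightarrow> real \<Rightarrow> 'v pt set" where
  "band V E Pt Ph z \<epsilon> = {Inner e t | e t. e \<in> all_edges V E \<and> Pt (fst e) \<and> Ph (snd e)
       \<and> \<bar>t - z\<bar> < \<epsilon> \<and> 0 < t \<and> t < 1}"

definition DBasis :: "'v set \<Rightarrow> ('v \<times> 'v) set \<Rightarrow> 'v pt set set" where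
  "DBasis V E =
     {DPoints V E}
   \<union> {vstar V E v \<epsilon> | v \<epsilon>. v \<in> V \<and> 0 < \<epsilon> \<and> \<epsilon> < 1}
   \<union> {{Inner (NV u, NV w) t | t. a < t \<and> t < b} | u w a b. (u,w) \<in> E \<and> 0 \<le> a \<and> a < b \<and> b \<le> 1}
   \<union> {hatC V E X \<omega> \<epsilon> | X \<omega> \<epsilon>. X \<in> fsets V \<and> \<omega> \<in> ends V E \<and> 0 < \<epsilon> \<and> \<epsilon> < 1}
   \<union> {band V E (node_in V E X (compE V E X \<omega>)) (node_in V E X (compE V E X \<eta>)) z \<epsilon>
        | X \<omega> \<eta> z \<epsilon>. (NE \<omega>, NE \<eta>) \<in> limit_edges V E \<and> X \<in> fsets V
            \<and> compE V E X \<omega> \<noteq> compE V E X \<eta> \<and> 0 < z \<and> z < 1 \<and> 0 < \<epsilon>}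
   \<union> {band V E (\<lambda>x. x = NV v) (node_in V E X (compE V E X \<omega>)) z \<epsilon>
        | X v \<omega> z \<epsilon>. (NV v, NE \<omega>) \<in> limit_edges V E \<and> X \<in> fsets V \<and> v \<in> X
            \<and> 0 < z \<and> z < 1 \<and> 0 < \<epsilon>}
   \<union> {band V E (node_in V E X (compE V E X \<omega>)) (\<lambda>x. x = NV v) z \<epsilon>
        | X v \<omega> z \<epsilon>. (NE \<omega>, NV v) \<in> limit_edges V E \<and> X \<in> fsets V \<and> v \<in> X
            \<and> 0 < z \<and> z < 1 \<and> 0 < \<epsilon>}"

definition DTop :: "'v set \<Rightarrow> ('v \<times> 'v) set \<Rightarrow> 'v pt topology" where
  "DTop V E = topology_generated_by (DBasis V E)"

definition cls :: "'v set set \<Rightarrow> 'v \<Rightarrow> 'v set" where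
  "cls P v = (THE p. p \<in> P \<and> v \<in> p)"

definition edges_between :: "('v \<times> 'v) set \<Rightarrow> 'v set \<Rightarrow> 'v set \<Rightarrow> ('v \<times> 'v) set" where
  "edges_between E p q = {(a,b) \<in> E. a \<in> p \<and> b \<in> q}"

text \<open>edges of D/P: a copy of an edge of D, or a quotient edge p1p2\<close>
datatype 'v qedge = QCopy "'v \<times> 'v" | QQuot "'v set" "'v set"

definition qedges :: "('v \<times> 'v) set \<Rightarrow> 'v set set \<Rightarrow> 'v qedge set" where
  "qedges E P =
     {QCopy (u,w) | u w. (u,w) \<in> E \<and> cls P u \<noteq> cls P w \<and> finite (edges_between E (cls P u) (cls P w))}
   \<union> {QQuot p q | p q. p \<in> P \<and> q \<in> P \<and> p \<noteq> q \<and> infinite (edges_between E p q)}"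

fun qtail :: "'v set set \<Rightarrow> 'v qedge \<Rightarrow> 'v set" where
  "qtail P (QCopy (u,w)) = cls P u"
| "qtail P (QQuot p q) = p"

fun qhead :: "'v set set \<Rightarrow> 'v qedge \<Rightarrow> 'v set" where
  "qhead P (QCopy (u,w)) = cls P w"
| "qhead P (QQuot p q) = q"

datatype 'v qpt = QV "'v set" | QI "'v qedge" real

definition QPoints :: "('v \<times> 'v) set \<Rightarrow> 'v set set \<Rightarrow> 'v qpt set" where
  "QPoints E P = QV ` P \<union> {QI e t | e t. e \<in> qedges E P \<and> 0 < t \<and> t < 1}"

text \<open>1-complex topology: open stars around vertices and open subintervals of edges\<close>
definition QBasis :: "('v \<times> 'v) set \<Rightarrow> 'v set set \<Rightarrow> 'v qpt set set" where
  "QBasis E P =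
     {QPoints E P}
   \<union> {{QV p} \<union> {QI e t | e t. e \<in> qedges E P \<and> qtail P e = p \<and> 0 < t \<and> t < \<epsilon>}
             \<union> {QI e t | e t. e \<in> qedges E P \<and> qhead P e = p \<and> 1 - \<epsilon> < t \<and> t < 1}
       | p \<epsilon>. p \<in> P \<and> 0 < \<epsilon> \<and> \<epsilon> < 1}
   \<union> {{QI e t | t. a < t \<and> t < b} | e a b. e \<in> qedges E P \<and> 0 \<le> a \<and> a < b \<and> b \<le> 1}"

definition QTop :: "('v \<times> 'v) set \<Rightarrow> 'v set set \<Rightarrow> 'v qpt topology" where
  "QTop E P = topology_generated_by (QBasis E P)"

definition node_cls :: "'v set set \<Rightarrow> 'v node \<Rightarrow> 'v set" where
  "node_cls P x = (case x of NV v \<Rightarrow> cls P v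
                   | NE \<omega> \<Rightarrow> (THE p. p \<in> P \<and> (\<forall>R\<in>\<omega>. tail_in R p)))"

definition phi :: "('v \<times> 'v) set \<Rightarrow> 'v set set \<Rightarrow> 'v pt \<Rightarrow> 'v qpt" where
  "phi E P z = (case z of
       Node x \<Rightarrow> QV (node_cls P x)
     | Inner (x, y) t \<Rightarrow>
         (if node_cls P x = node_cls P y then QV (node_cls P x)
          else (case (x, y) of
                  (NV u, NV w) \<Rightarrow>
                     if finite (edges_between E (cls P u) (cls P w)) then QI (QCopy (u, w)) t
                     else QI (QQuot (cls P u) (cls P w)) t
                | _ \<Rightarrow> QI (QQuot (node_cls P x) (node_cls P y)) t)))"

end

theory Submission imports Defs begin

lemma reach_trans:
  "reach_in S E a b \<Longrightarrow> reach_in S E b c \<Longrightarrow> reach_in S E a c"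
  unfolding reach_in_def using rtrancl_trans by metis

lemma reach_mono:
  "S \<subseteq> S' \<Longrightarrow> reach_in S E a b \<Longrightarrow> reach_in S' E a b"
  unfolding reach_in_def
proof -
  assume a: "S \<subseteq> S'" "a \<in> S \<and> b \<in> S \<and> (a, b) \<in> (E \<inter> S \<times> S)\<^sup>*"
  have "E \<inter> S \<times> S \<subseteq> E \<inter> S' \<times> S'" using a(1) by auto
  from rtrancl_mono[OF this] a show "a \<in> S' \<and> b \<in> S' \<and> (a, b) \<in> (E \<inter> S' \<times> S')\<^sup>*" by auto
qed

lemma reach_refl: "a \<in> S \<Longrightarrow> reach_in S E a a"
  unfolding reach_in_def by auto

lemma scomps_eq:
  assumes "C \<in> scomps V E X" "x \<in> C"
  shows "C = {w. reach_in (V-X) E x w \<and> reach_in (V-X) E w x}"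
proof -
  from assms(1) obtain v where v: "v \<in> V - X" and C: "C = {w. reach_in (V-X) E v w \<and> reach_in (V-X) E w v}"
    unfolding scomps_def by auto
  with assms(2) have "reach_in (V-X) E v x" "reach_in (V-X) E x v" by auto
  then show ?thesis unfolding C
  proof (intro set_eqI iffI; clarsimp)
    fix w assume h: "reach_in (V - X) E v x" "reach_in (V - X) E x v" "reach_in (V - X) E v w" "reach_in (V - X) E w v"
    show "reach_in (V - X) E x w \<and> reach_in (V - X) E w x"
      using reach_trans[OF h(2) h(3)] reach_trans[OF h(4) h(1)] by simp
  next
    fix w assume h: "reach_in (V - X) E v x" "reach_in (V - X) E x v" "reach_in (V - X) E x w" "reach_in (V - X) E w x"
    show "reach_in (V - X) E v w \<and> reach_in (V - X) E w v"
      using reach_trans[OF h(1) h(3)] reach_trans[OF h(4) h(2)] by simp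
  qed
qed

lemma scomps_disj:
  "C \<in> scomps V E X \<Longrightarrow> C' \<in> scomps V E X \<Longrightarrow> x \<in> C \<Longrightarrow> x \<in> C' \<Longrightarrow> C = C'"
  using scomps_eq[of C V E X x] scomps_eq[of C' V E X x] by simp

lemma scomps_sub:
  assumes "C \<in> scomps V E X" shows "C \<subseteq> V - X" "C \<noteq> {}"
proof -
  from assms obtain v where v: "v \<in> V - X" and C: "C = {w. reach_in (V-X) E v w \<and> reach_in (V-X) E w v}"
    unfolding scomps_def by auto
  show "C \<subseteq> V - X" unfolding C reach_in_def by auto
  show "C \<noteq> {}" using v reach_refl[OF v] C by auto
qed

lemma tail_meet:
  assumes "tail_in R A" "tail_in R B" shows "\<exists>x. x \<in> A \<and> x \<in> B"
proof -
  from assms obtain k1 k2 where "\<forall>i\<ge>k1. R i \<in> A" "\<forall>i\<ge>k2. R i \<in> B" unfolding tail_in_def by auto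
  then have "R (max k1 k2) \<in> A" "R (max k1 k2) \<in> B" by auto
  then show ?thesis by blast
qed

lemma ends_ex:
  assumes "\<omega> \<in> ends V E"
  obtains R0 where "solid V E R0" "\<omega> = {S. solid V E S \<and> ray_equiv V E R0 S}" "R0 \<in> \<omega>"
proof -
  from assms obtain R0 where s: "solid V E R0" and w: "\<omega> = {S. solid V E S \<and> ray_equiv V E R0 S}"
    unfolding ends_def by auto
  have "ray_equiv V E R0 R0" using s unfolding solid_def ray_equiv_def by auto
  with s w that show ?thesis by auto
qed

lemma compE_props:
  assumes "\<omega> \<in> ends V E" "X \<in> fsets V"
  shows "compE V E X \<omega> \<in> scomps V E X" "\<forall>R\<in>\<omega>. tail_in R (compE V E X \<omega>)"
proof -
  obtain R0 where s: "solid V E R0" and w: "\<omega> = {S. solid V E S \<and> ray_equiv V E R0 S}" and r: "R0 \<in> \<omega>"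
    using ends_ex[OF assms(1)] by metis
  from s assms(2) obtain C where C: "C \<in> scomps V E X" "tail_in R0 C" unfolding solid_def by auto
  have all: "\<forall>R\<in>\<omega>. tail_in R C"
  proof
    fix S assume "S \<in> \<omega>"
    then have "ray_equiv V E R0 S" using w by auto
    with assms(2) obtain C' where C': "C' \<in> scomps V E X" "tail_in R0 C'" "tail_in S C'"
      unfolding ray_equiv_def by auto
    from tail_meet[OF C(2) C'(2)] obtain x where "x \<in> C" "x \<in> C'" by auto
    then have "C' = C" using scomps_disj[OF C'(1) C(1)] by blast
    then show "tail_in S C" using C' by auto
  qed
  have uniq: "C' = C" if "C' \<in> scomps V E X \<and> (\<forall>R\<in>\<omega>. tail_in R C')" for C'
  proof -
    from that r have "tail_in R0 C'" by auto
    from tail_meet[OF C(2) this] obtain x where "x \<in> C" "x \<in> C'" by auto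
    then show ?thesis using scomps_disj[OF _ C(1), of C'] that by blast
  qed
  have "compE V E X \<omega> = C" unfolding compE_def
  proof (rule the_equality)
    show "C \<in> scomps V E X \<and> (\<forall>R\<in>\<omega>. tail_in R C)" using C(1) all by blast
  qed (rule uniq)
  then show "compE V E X \<omega> \<in> scomps V E X" "\<forall>R\<in>\<omega>. tail_in R (compE V E X \<omega>)" using C(1) all by simp_all
qed

lemma tail_mono: "tail_in R A \<Longrightarrow> A \<subseteq> B \<Longrightarrow> tail_in R B"
  unfolding tail_in_def by blast

definition qof :: "('v \<times> 'v) set \<Rightarrow> 'v set set \<Rightarrow> 'v node \<Rightarrow> 'v node \<Rightarrow> 'v qedge" where
  "qof E P x y = (case (x, y) of
                  (NV u, NV w) \<Rightarrow>
                     if finite (edges_between E (cls P u) (cls P w)) then QCopy (u, w)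
                     else QQuot (cls P u) (cls P w)
                | _ \<Rightarrow> QQuot (node_cls P x) (node_cls P y))"
lemma qof_simps: "qof E P (NV u) (NV w) = (if finite (edges_between E (cls P u) (cls P w)) then QCopy (u, w)
                     else QQuot (cls P u) (cls P w))"
  "qof E P (NE a) y = QQuot (node_cls P (NE a)) (node_cls P y)"
  "qof E P x (NE b) = QQuot (node_cls P x) (node_cls P (NE b))"
  unfolding qof_def by (simp_all split: node.split)
lemma phi_Inner:
  "phi E P (Inner (x,y) t) = (if node_cls P x = node_cls P y then QV (node_cls P x) else QI (qof E P x y) t)"
  unfolding phi_def pt.case prod.case
  by (cases x; cases y) (simp_all only: qof_simps node.case prod.case if_distrib[of "\<lambda>e. QI e t"])

lemma phi_Node: "phi E P (Node x) = QV (node_cls P x)"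
  by (simp add: phi_def)

lemma nc_NV: "node_cls P (NV v) = cls P v"
  by (simp add: node_cls_def)

locale qsetup =
  fixes V :: "'v set" and E :: "('v \<times> 'v) set" and P :: "'v set set" and X0 :: "'v set"
  assumes dg: "digraph V E" and adm: "admissible V E P" and X0: "X0 \<in> fsets V"
    and sep: "\<And>p q. p \<in> P \<Longrightarrow> q \<in> P \<Longrightarrow> p \<noteq> q \<Longrightarrow> \<exists>Y. Y \<subseteq> X0 \<and> separates V E Y p q"
begin

abbreviation "nc \<equiv> node_cls P"

lemma EV: "(a,b) \<in> E \<Longrightarrow> a \<in> V \<and> b \<in> V"
proof -
  assume "(a,b) \<in> E"
  moreover have "E \<subseteq> V \<times> V" using dg unfolding digraph_def by simp
  ultimately show ?thesis by blast
qed

lemma P_disj: "p \<in> P \<Longrightarrow> q \<in> P \<Longrightarrow> x \<in> p \<Longrightarrow> x \<in> q \<Longrightarrow> p = q"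
proof -
  assume h: "p \<in> P" "q \<in> P" "x \<in> p" "x \<in> q"
  have "\<forall>p\<in>P. \<forall>q\<in>P. p \<noteq> q \<longrightarrow> p \<inter> q = {}" using adm unfolding admissible_def by simp
  with h show "p = q" by blast
qed

lemma cls_eq: "v \<in> p \<Longrightarrow> p \<in> P \<Longrightarrow> cls P v = p"
  unfolding cls_def
proof (rule the_equality)
  assume "v \<in> p" "p \<in> P"
  then show "p \<in> P \<and> v \<in> p" by simp
  fix p' assume "p' \<in> P \<and> v \<in> p'"
  then show "p' = p" using P_disj \<open>v \<in> p\<close> \<open>p \<in> P\<close> by blast
qed

lemma cls_props: assumes "v \<in> V" shows "cls P v \<in> P" "v \<in> cls P v"
proof -
  have "\<Union>P = V" using adm unfolding admissible_def by simp
  with assms obtain p where "p \<in> P" "v \<in> p" by blast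
  with cls_eq show "cls P v \<in> P" "v \<in> cls P v" by auto
qed

lemma compA:
  assumes X: "X \<in> fsets V" "X0 \<subseteq> X" and C: "C \<in> scomps V E X" and c: "c \<in> C" and d: "d \<in> C"
  shows "cls P d = cls P c"
proof (rule ccontr)
  assume ne: "cls P d \<noteq> cls P c"
  have cV: "c \<in> V" "d \<in> V" using scomps_sub(1)[OF C] c d by auto
  have Ceq: "C = {w. reach_in (V-X) E c w \<and> reach_in (V-X) E w c}" using scomps_eq[OF C c] .
  have r1: "reach_in (V-X) E c d" "reach_in (V-X) E d c" using d Ceq by auto
  obtain Y where Y: "Y \<subseteq> X0" "separates V E Y (cls P c) (cls P d)"
    using sep[OF cls_props(1)[OF cV(1)] cls_props(1)[OF cV(2)]] ne by metis
  have sub: "V - X \<subseteq> V - Y" using Y(1) X(2) by auto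
  have r2: "reach_in (V-Y) E c d" "reach_in (V-Y) E d c"
    using reach_mono[OF sub r1(1)] reach_mono[OF sub r1(2)] .
  show False using Y(2) r2 cls_props(2)[OF cV(1)] cls_props(2)[OF cV(2)]
    unfolding separates_def by blast
qed

lemma ncE:
  assumes w: "\<omega> \<in> ends V E" and X: "X \<in> fsets V" "X0 \<subseteq> X"
  shows "nc (NE \<omega>) \<in> P" "compE V E X \<omega> \<subseteq> nc (NE \<omega>)"
proof -
  let ?C = "compE V E X \<omega>"
  have C: "?C \<in> scomps V E X" "\<forall>R\<in>\<omega>. tail_in R ?C" using compE_props[OF w X(1)] by auto
  obtain c where c: "c \<in> ?C" using scomps_sub(2)[OF C(1)] by auto
  have cV: "c \<in> V" using scomps_sub(1)[OF C(1)] c by auto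
  define p where "p = cls P c"
  have pP: "p \<in> P" using cls_props[OF cV] p_def by auto
  have Cp: "?C \<subseteq> p"
  proof
    fix d assume "d \<in> ?C"
    then have "cls P d = p" using compA[OF X C(1) c] p_def by auto
    moreover have "d \<in> V" using scomps_sub(1)[OF C(1)] \<open>d \<in> ?C\<close> by auto
    ultimately show "d \<in> p" using cls_props(2) by metis
  qed
  obtain R0 where R0: "R0 \<in> \<omega>" using ends_ex[OF w] by metis
  have "nc (NE \<omega>) = p" unfolding node_cls_def node.case
  proof (rule the_equality)
    show "p \<in> P \<and> (\<forall>R\<in>\<omega>. tail_in R p)" using pP C(2) Cp tail_mono by blast
  next
    fix p' assume h: "p' \<in> P \<and> (\<forall>R\<in>\<omega>. tail_in R p')"
    then have "tail_in R0 p'" using R0 by auto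
    moreover have "tail_in R0 p" using C(2) R0 Cp tail_mono by blast
    ultimately obtain x where "x \<in> p'" "x \<in> p" using tail_meet by metis
    then show "p' = p" using P_disj h pP by blast
  qed
  then show "nc (NE \<omega>) \<in> P" "?C \<subseteq> nc (NE \<omega>)" using pP Cp by auto
qed

lemma X0V: "X0 \<subseteq> V" "finite X0" using X0 unfolding fsets_def by auto

lemma nodes_P: "x \<in> nodes V E \<Longrightarrow> nc x \<in> P"
  unfolding nodes_def using ncE(1)[OF _ X0] cls_props(1) by (auto simp: nc_NV)

lemma node_in_nc:
  assumes X: "X \<in> fsets V" "X0 \<subseteq> X" and w: "\<omega> \<in> ends V E"
    and n: "node_in V E X (compE V E X \<omega>) x"
  shows "nc x = nc (NE \<omega>)"
proof (cases x)
  case (NV v)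
  then have "v \<in> compE V E X \<omega>" using n unfolding node_in_def by simp
  then have "v \<in> nc (NE \<omega>)" using ncE(2)[OF w X] by auto
  then show ?thesis using NV cls_eq ncE(1)[OF w X] nc_NV by metis
next
  case (NE \<eta>)
  then have h: "\<eta> \<in> ends V E" "compE V E X \<eta> = compE V E X \<omega>" using n unfolding node_in_def by auto
  obtain c where c: "c \<in> compE V E X \<omega>" using scomps_sub(2)[OF compE_props(1)[OF w X(1)]] by auto
  have "c \<in> nc (NE \<eta>)" using ncE(2)[OF h(1) X] h(2) c by auto
  moreover have "c \<in> nc (NE \<omega>)" using ncE(2)[OF w X] c by auto
  ultimately show ?thesis using P_disj ncE(1)[OF w X] ncE(1)[OF h(1) X] NE by metis
qed

lemma limit_cases:
  assumes "(x,y) \<in> limit_edges V E"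
  obtains (EE) \<omega> \<eta> where "x = NE \<omega>" "y = NE \<eta>" "\<omega> \<in> ends V E" "\<eta> \<in> ends V E" "\<omega> \<noteq> \<eta>"
      "\<forall>X\<in>fsets V. compE V E X \<omega> \<noteq> compE V E X \<eta> \<longrightarrow>
           (\<exists>(a,b)\<in>E. a \<in> compE V E X \<omega> \<and> b \<in> compE V E X \<eta>)"
  | (VE) v \<omega> where "x = NV v" "y = NE \<omega>" "v \<in> V" "\<omega> \<in> ends V E"
      "\<forall>X\<in>fsets V. v \<notin> compE V E X \<omega> \<longrightarrow> (\<exists>b. (v,b) \<in> E \<and> b \<in> compE V E X \<omega>)"
  | (EV) v \<omega> where "x = NE \<omega>" "y = NV v" "v \<in> V" "\<omega> \<in> ends V E"
      "\<forall>X\<in>fsets V. v \<notin> compE V E X \<omega> \<longrightarrow> (\<exists>a. (a,v) \<in> E \<and> a \<in> compE V E X \<omega>)"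
proof -
  from assms consider (a) "(x,y) \<in> {(NE \<omega>, NE \<eta>) | \<omega> \<eta>. \<omega> \<in> ends V E \<and> \<eta> \<in> ends V E \<and> \<omega> \<noteq> \<eta> \<and>
        (\<forall>X\<in>fsets V. compE V E X \<omega> \<noteq> compE V E X \<eta> \<longrightarrow>
           (\<exists>(a,b)\<in>E. a \<in> compE V E X \<omega> \<and> b \<in> compE V E X \<eta>))}"
   | (b) "(x,y) \<in> {(NV v, NE \<omega>) | v \<omega>. v \<in> V \<and> \<omega> \<in> ends V E \<and>
        (\<forall>X\<in>fsets V. v \<notin> compE V E X \<omega> \<longrightarrow> (\<exists>b. (v,b) \<in> E \<and> b \<in> compE V E X \<omega>))}"
   | (c) "(x,y) \<in> {(NE \<omega>, NV v) | v \<omega>. v \<in> V \<and> \<omega> \<in> ends V E \<and>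
        (\<forall>X\<in>fsets V. v \<notin> compE V E X \<omega> \<longrightarrow> (\<exists>a. (a,v) \<in> E \<and> a \<in> compE V E X \<omega>))}"
    unfolding limit_edges_def by blast
  then show thesis
  proof cases
    case a then obtain \<omega> \<eta> where "x = NE \<omega>" "y = NE \<eta>" "\<omega> \<in> ends V E \<and> \<eta> \<in> ends V E \<and> \<omega> \<noteq> \<eta> \<and>
        (\<forall>X\<in>fsets V. compE V E X \<omega> \<noteq> compE V E X \<eta> \<longrightarrow>
           (\<exists>(a,b)\<in>E. a \<in> compE V E X \<omega> \<and> b \<in> compE V E X \<eta>))" by blast
    then show thesis using EE by blast
  next
    case b then obtain v \<omega> where "x = NV v" "y = NE \<omega>" "v \<in> V \<and> \<omega> \<in> ends V E \<and>
        (\<forall>X\<in>fsets V. v \<notin> compE V E X \<omega> \<longrightarrow> (\<exists>b. (v,b) \<in> E \<and> b \<in> compE V E X \<omega>))" by blast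
    then show thesis using VE by blast
  next
    case c then obtain v \<omega> where "x = NE \<omega>" "y = NV v" "v \<in> V \<and> \<omega> \<in> ends V E \<and>
        (\<forall>X\<in>fsets V. v \<notin> compE V E X \<omega> \<longrightarrow> (\<exists>a. (a,v) \<in> E \<and> a \<in> compE V E X \<omega>))" by blast
    then show thesis using EV by blast
  qed
qed

lemma all_edges_cases:
  assumes "(x,y) \<in> all_edges V E"
  obtains (R) u w where "x = NV u" "y = NV w" "(u,w) \<in> E"
  | (L) "(x,y) \<in> limit_edges V E"
proof -
  from assms consider (a) "(x,y) \<in> {(NV u, NV w) | u w. (u,w) \<in> E}" | (b) "(x,y) \<in> limit_edges V E"
    unfolding all_edges_def by blast
  then show thesis
  proof cases
    case a then obtain u w where "x = NV u" "y = NV w" "(u,w) \<in> E" by blast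
    then show thesis using R by blast
  qed (rule L)
qed

lemma all_edges_nodes:
  assumes "(x,y) \<in> all_edges V E" shows "x \<in> nodes V E" "y \<in> nodes V E"
proof -
  have "x \<in> nodes V E \<and> y \<in> nodes V E" using assms
  proof (cases rule: all_edges_cases)
    case (R u w) then show ?thesis using EV unfolding nodes_def by auto
  next
    case L then show ?thesis
      by (cases rule: limit_cases) (auto simp: nodes_def)
  qed
  then show "x \<in> nodes V E" "y \<in> nodes V E" by auto
qed

lemma limit_inf:
  assumes L: "(x,y) \<in> limit_edges V E" and ne: "nc x \<noteq> nc y"
  shows "infinite (edges_between E (nc x) (nc y))"
proof
  assume fin: "finite (edges_between E (nc x) (nc y))"
  define F0 where "F0 = edges_between E (nc x) (nc y)"
  define F where "F = X0 \<union> fst ` F0 \<union> snd ` F0"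
  have F0E: "F0 \<subseteq> E" unfolding F0_def edges_between_def by auto
  have FV: "F \<subseteq> V" unfolding F_def using X0V F0E EV by force
  have Ffin: "finite F" unfolding F_def using X0V fin F0_def by auto
  have nodes: "x \<in> nodes V E" "y \<in> nodes V E" using all_edges_nodes L unfolding all_edges_def by auto
  have inF0: "(a,b) \<in> F0" if "(a,b) \<in> E" "a \<in> nc x" "b \<in> nc y" for a b
    using that unfolding F0_def edges_between_def by auto
  from L show False
  proof (cases rule: limit_cases)
    case (EE \<omega> \<eta>)
    have X: "F \<in> fsets V" "X0 \<subseteq> F" using FV Ffin unfolding fsets_def F_def by auto
    have s1: "compE V E F \<omega> \<subseteq> nc x" "compE V E F \<eta> \<subseteq> nc y" using ncE(2)[OF _ X] EE by auto
    have "compE V E F \<omega> \<noteq> compE V E F \<eta>"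
    proof
      assume eq: "compE V E F \<omega> = compE V E F \<eta>"
      obtain c where c: "c \<in> compE V E F \<omega>" using scomps_sub(2)[OF compE_props(1)[OF EE(3) X(1)]] by auto
      then show False using s1 eq ne P_disj nodes_P nodes by blast
    qed
    then obtain a b where ab: "(a,b) \<in> E" "a \<in> compE V E F \<omega>" "b \<in> compE V E F \<eta>" using EE(6) X(1) by blast
    then have "a \<in> F" using inF0 s1 unfolding F_def by force
    moreover have "a \<notin> F" using ab(2) scomps_sub(1)[OF compE_props(1)[OF EE(3) X(1)]] by auto
    ultimately show False by simp
  next
    case (VE v \<omega>)
    have X: "insert v F \<in> fsets V" "X0 \<subseteq> insert v F" using FV Ffin VE(3) unfolding fsets_def F_def by auto
    have s1: "compE V E (insert v F) \<omega> \<subseteq> nc y" using ncE(2)[OF _ X] VE by auto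
    have sub: "compE V E (insert v F) \<omega> \<subseteq> V - insert v F" using scomps_sub(1)[OF compE_props(1)[OF VE(4) X(1)]] .
    then obtain b where b: "(v,b) \<in> E" "b \<in> compE V E (insert v F) \<omega>" using VE(5) X(1) by blast
    have "v \<in> nc x" using VE cls_props(2) nc_NV by metis
    then have "b \<in> F" using inF0 b s1 unfolding F_def by force
    then show False using b(2) sub by auto
  next
    case (EV v \<omega>)
    have X: "insert v F \<in> fsets V" "X0 \<subseteq> insert v F" using FV Ffin EV(3) unfolding fsets_def F_def by auto
    have s1: "compE V E (insert v F) \<omega> \<subseteq> nc x" using ncE(2)[OF _ X] EV by auto
    have sub: "compE V E (insert v F) \<omega> \<subseteq> V - insert v F" using scomps_sub(1)[OF compE_props(1)[OF EV(4) X(1)]] .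
    then obtain a where a: "(a,v) \<in> E" "a \<in> compE V E (insert v F) \<omega>" using EV(5) X(1) by blast
    have "v \<in> nc y" using EV cls_props(2) nc_NV by metis
    then have "a \<in> F" using inF0 a s1 unfolding F_def by force
    then show False using a(2) sub by auto
  qed
qed

lemma qof_props:
  assumes e: "(x,y) \<in> all_edges V E" and ne: "nc x \<noteq> nc y"
  shows "qof E P x y \<in> qedges E P" "qtail P (qof E P x y) = nc x" "qhead P (qof E P x y) = nc y"
proof -
  have nodes: "nc x \<in> P" "nc y \<in> P" using all_edges_nodes[OF e] nodes_P by auto
  have "qof E P x y \<in> qedges E P \<and> qtail P (qof E P x y) = nc x \<and> qhead P (qof E P x y) = nc y"
    using e
  proof (cases rule: all_edges_cases)
    case (R u w)
    then show ?thesis using ne nodes unfolding qedges_def by (auto simp: qof_simps nc_NV)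
  next
    case L
    have q: "qof E P x y = QQuot (nc x) (nc y)"
      using L by (cases rule: limit_cases) (auto simp: qof_simps)
    show ?thesis unfolding q qedges_def using nodes ne limit_inf[OF L ne] by auto
  qed
  then show "qof E P x y \<in> qedges E P" "qtail P (qof E P x y) = nc x" "qhead P (qof E P x y) = nc y" by auto
qed

lemma qof_inf:
  assumes "infinite (edges_between E (nc x) (nc y))"
  shows "qof E P x y = QQuot (nc x) (nc y)"
  using assms by (cases x; cases y) (auto simp: qof_simps nc_NV)

lemma qof_lim:
  assumes "(x,y) \<in> limit_edges V E" "nc x \<noteq> nc y"
  shows "qof E P x y = QQuot (nc x) (nc y)"
  using qof_inf limit_inf assms by blast

lemma phi_DP: assumes "z \<in> DPoints V E" shows "phi E P z \<in> QPoints E P"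
proof -
  from assms consider (N) x where "z = Node x" "x \<in> nodes V E"
    | (I) x y t where "z = Inner (x,y) t" "(x,y) \<in> all_edges V E" "0 < t" "t < 1"
    unfolding DPoints_def by auto
  then show ?thesis
  proof cases
    case N then show ?thesis using nodes_P unfolding QPoints_def by (auto simp: phi_Node)
  next
    case I
    show ?thesis
    proof (cases "nc x = nc y")
      case True then show ?thesis using I nodes_P all_edges_nodes unfolding QPoints_def by (auto simp: phi_Inner)
    next
      case False then show ?thesis using I qof_props(1)[OF I(2) False] unfolding QPoints_def by (auto simp: phi_Inner)
    qed
  qed
qed

definition Sstar :: "('v \<times> 'v) set \<Rightarrow> 'v set set \<Rightarrow> 'v set \<Rightarrow> real \<Rightarrow> 'v qpt set" where
  "Sstar E' P' p \<epsilon> = {QV p} \<union> {QI e t | e t. e \<in> qedges E' P' \<and> qtail P' e = p \<and> 0 < t \<and> t < \<epsilon>}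
             \<union> {QI e t | e t. e \<in> qedges E' P' \<and> qhead P' e = p \<and> 1 - \<epsilon> < t \<and> t < 1}"

lemma H0:
  assumes "nc x = p" "nc y = p"
  shows "phi E P (Inner (x,y) t) \<in> Sstar E P p \<epsilon>"
  using assms by (simp add: phi_Inner Sstar_def)

lemma H1:
  assumes e: "(x,y) \<in> all_edges V E" and t: "0 < t" "t < \<epsilon>" and p: "nc x = p"
  shows "phi E P (Inner (x,y) t) \<in> Sstar E P p \<epsilon>"
proof (cases "nc x = nc y")
  case True then show ?thesis using p by (simp add: phi_Inner Sstar_def)
next
  case False
  have "phi E P (Inner (x,y) t) = QI (qof E P x y) t" using False by (simp add: phi_Inner)
  moreover have "qof E P x y \<in> qedges E P" "qtail P (qof E P x y) = p" using qof_props[OF e False] p by auto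
  ultimately show ?thesis using t unfolding Sstar_def by blast
qed

lemma H2:
  assumes e: "(x,y) \<in> all_edges V E" and t: "1 - \<epsilon> < t" "t < 1" and p: "nc y = p"
  shows "phi E P (Inner (x,y) t) \<in> Sstar E P p \<epsilon>"
proof (cases "nc x = nc y")
  case True then show ?thesis using p by (simp add: phi_Inner Sstar_def)
next
  case False
  have "phi E P (Inner (x,y) t) = QI (qof E P x y) t" using False by (simp add: phi_Inner)
  moreover have "qof E P x y \<in> qedges E P" "qhead P (qof E P x y) = p" using qof_props[OF e False] p by auto
  ultimately show ?thesis using t unfolding Sstar_def by blast
qed

lemma X0f: "X0 \<in> fsets V" "X0 \<subseteq> X0" using X0 by auto

lemma hatC_sub:
  assumes w: "\<omega> \<in> ends V E" and z: "z \<in> hatC V E X0 \<omega> \<epsilon>"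
  shows "phi E P z \<in> Sstar E P (nc (NE \<omega>)) \<epsilon>"
proof -
  let ?C = "compE V E X0 \<omega>"
  let ?inC = "node_in V E X0 ?C"
  have ncC: "nc x = nc (NE \<omega>)" if "?inC x" for x using node_in_nc[OF X0f w that] .
  from z consider (N) x where "z = Node x" "?inC x"
    | (B) x y t where "z = Inner (x,y) t" "?inC x" "?inC y"
    | (T) x y t where "z = Inner (x,y) t" "(x,y) \<in> all_edges V E" "?inC x" "0 < t" "t < \<epsilon>"
    | (Hd) x y t where "z = Inner (x,y) t" "(x,y) \<in> all_edges V E" "?inC y" "1 - \<epsilon> < t" "t < 1"
    unfolding hatC_def Let_def by auto
  then show ?thesis
  proof cases
    case N then show ?thesis using ncC by (simp add: phi_Node Sstar_def)
  next
    case B then show ?thesis using ncC H0 by simp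
  next
    case T then show ?thesis using ncC H1 by simp
  next
    case Hd then show ?thesis using ncC H2 by simp
  qed
qed

lemma DB_all: "DPoints V E \<in> DBasis V E" unfolding DBasis_def by blast
lemma DB_vstar: "v \<in> V \<Longrightarrow> 0 < \<epsilon> \<Longrightarrow> \<epsilon> < 1 \<Longrightarrow> vstar V E v \<epsilon> \<in> DBasis V E"
  unfolding DBasis_def
  apply (rule UnI1, rule UnI1, rule UnI1, rule UnI1, rule UnI1, rule UnI2)
  apply (rule CollectI, rule exI, rule exI, rule conjI, rule refl)
  by simp
lemma DB_int: "(u,w) \<in> E \<Longrightarrow> 0 \<le> a \<Longrightarrow> a < b \<Longrightarrow> b \<le> 1 \<Longrightarrow>
   {Inner (NV u, NV w) t | t. a < t \<and> t < b} \<in> DBasis V E"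
  unfolding DBasis_def
  apply (rule UnI1, rule UnI1, rule UnI1, rule UnI1, rule UnI2)
  apply (rule CollectI, rule exI, rule exI, rule exI, rule exI, rule conjI, rule refl)
  by simp
lemma DB_hatC: "X \<in> fsets V \<Longrightarrow> \<omega> \<in> ends V E \<Longrightarrow> 0 < \<epsilon> \<Longrightarrow> \<epsilon> < 1 \<Longrightarrow> hatC V E X \<omega> \<epsilon> \<in> DBasis V E"
  unfolding DBasis_def
  apply (rule UnI1, rule UnI1, rule UnI1, rule UnI2)
  apply (rule CollectI, rule exI, rule exI, rule exI, rule conjI, rule refl)
  by simp
lemma DB_band1: "(NE \<omega>, NE \<eta>) \<in> limit_edges V E \<Longrightarrow> X \<in> fsets V \<Longrightarrow> compE V E X \<omega> \<noteq> compE V E X \<eta>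
   \<Longrightarrow> 0 < z \<Longrightarrow> z < 1 \<Longrightarrow> 0 < \<epsilon> \<Longrightarrow>
   band V E (node_in V E X (compE V E X \<omega>)) (node_in V E X (compE V E X \<eta>)) z \<epsilon> \<in> DBasis V E"
  unfolding DBasis_def
  apply (rule UnI1, rule UnI1, rule UnI2)
  apply (rule CollectI, rule exI[of _ X], rule exI[of _ \<omega>], rule exI[of _ \<eta>], rule exI[of _ z], rule exI[of _ \<epsilon>], rule conjI, rule refl)
  by simp
lemma DB_band2: "(NV v, NE \<omega>) \<in> limit_edges V E \<Longrightarrow> X \<in> fsets V \<Longrightarrow> v \<in> X
   \<Longrightarrow> 0 < z \<Longrightarrow> z < 1 \<Longrightarrow> 0 < \<epsilon> \<Longrightarrow>
   band V E (\<lambda>x. x = NV v) (node_in V E X (compE V E X \<omega>)) z \<epsilon> \<in> DBasis V E"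
  unfolding DBasis_def
  apply (rule UnI1, rule UnI2)
  apply (rule CollectI, rule exI[of _ X], rule exI[of _ v], rule exI[of _ \<omega>], rule exI[of _ z], rule exI[of _ \<epsilon>], rule conjI, rule refl)
  by simp
lemma DB_band3: "(NE \<omega>, NV v) \<in> limit_edges V E \<Longrightarrow> X \<in> fsets V \<Longrightarrow> v \<in> X
   \<Longrightarrow> 0 < z \<Longrightarrow> z < 1 \<Longrightarrow> 0 < \<epsilon> \<Longrightarrow>
   band V E (node_in V E X (compE V E X \<omega>)) (\<lambda>x. x = NV v) z \<epsilon> \<in> DBasis V E"
  unfolding DBasis_def
  apply (rule UnI2)
  apply (rule CollectI, rule exI[of _ X], rule exI[of _ v], rule exI[of _ \<omega>], rule exI[of _ z], rule exI[of _ \<epsilon>], rule conjI, rule refl)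
  by simp

lemma band_subD: "band V E Pt Ph z \<epsilon> \<subseteq> DPoints V E"
  unfolding band_def DPoints_def by blast
lemma hatC_subD: "\<epsilon> < 1 \<Longrightarrow> hatC V E X \<omega> \<epsilon> \<subseteq> DPoints V E"
  unfolding hatC_def Let_def DPoints_def by auto
lemma vstar_subD: "v \<in> V \<Longrightarrow> \<epsilon> < 1 \<Longrightarrow> vstar V E v \<epsilon> \<subseteq> DPoints V E"
  unfolding vstar_def DPoints_def nodes_def by auto
lemma int_subD: "(u,w) \<in> E \<Longrightarrow> 0 \<le> a \<Longrightarrow> b \<le> 1 \<Longrightarrow> {Inner (NV u, NV w) t | t. a < t \<and> t < b} \<subseteq> DPoints V E"
proof
  fix z assume h: "(u,w) \<in> E" "0 \<le> a" "b \<le> 1" "z \<in> {Inner (NV u, NV w) t | t. a < t \<and> t < b}"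
  then obtain t where t: "z = Inner (NV u, NV w) t" "a < t" "t < b" by blast
  have "(NV u, NV w) \<in> all_edges V E" using h(1) unfolding all_edges_def by blast
  then show "z \<in> DPoints V E" using t h(2,3) unfolding DPoints_def by force
qed

lemma DBasis_sub: assumes "B \<in> DBasis V E" shows "B \<subseteq> DPoints V E"
  using assms unfolding DBasis_def
  apply (elim UnE CollectE exE conjE)
  using vstar_subD int_subD hatC_subD band_subD by auto

lemma QBasis_cases:
  assumes "U \<in> QBasis E P"
  obtains (A) "U = QPoints E P"
  | (S) p \<epsilon> where "p \<in> P" "0 < \<epsilon>" "\<epsilon> < 1" "U = Sstar E P p \<epsilon>"
  | (I) e a b where "e \<in> qedges E P" "0 \<le> a" "a < b" "b \<le> 1" "U = {QI e t | t. a < t \<and> t < b}"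
  using assms unfolding QBasis_def Sstar_def by blast

lemma witness: "B \<in> D \<Longrightarrow> z \<in> B \<Longrightarrow> (\<forall>z'\<in>B. Q z') \<Longrightarrow> \<exists>B\<in>D. z \<in> B \<and> (\<forall>z'\<in>B. Q z')"
  by blast

lemma witness': "B \<in> D \<Longrightarrow> (\<forall>z'\<in>B. Q z') \<Longrightarrow> z \<in> B \<Longrightarrow> \<exists>B\<in>D. z \<in> B \<and> (\<forall>z'\<in>B. Q z')"
  by blast

lemma star_nbhd:
  assumes z: "z \<in> DPoints V E" and ph: "phi E P z = QV p" and \<epsilon>: "0 < \<epsilon>" "\<epsilon> < 1"
  shows "\<exists>B\<in>DBasis V E. z \<in> B \<and> (\<forall>z'\<in>B. phi E P z' \<in> Sstar E P p \<epsilon>)"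
proof -
  from z consider (N) x where "z = Node x" "x \<in> nodes V E"
    | (I) x y t where "z = Inner (x,y) t" "(x,y) \<in> all_edges V E" "0 < t" "t < 1"
    unfolding DPoints_def by auto
  then show ?thesis
  proof cases
    case N
    then have p: "nc x = p" using ph by (simp add: phi_Node)
    show ?thesis
    proof (cases x)
      case (NV v)
      have v: "v \<in> V" using N NV unfolding nodes_def by auto
      have "\<forall>z'\<in>vstar V E v \<epsilon>. phi E P z' \<in> Sstar E P p \<epsilon>"
      proof
        fix z' assume "z' \<in> vstar V E v \<epsilon>"
        then consider (Z) "z' = Node (NV v)"
          | (T) x' y' s where "z' = Inner (x',y') s" "(x',y') \<in> all_edges V E" "x' = NV v" "0 < s" "s < \<epsilon>"
          | (H) x' y' s where "z' = Inner (x',y') s" "(x',y') \<in> all_edges V E" "y' = NV v" "1 - \<epsilon> < s" "s < 1"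
          unfolding vstar_def by auto
        then show "phi E P z' \<in> Sstar E P p \<epsilon>"
        proof cases
          case Z then show ?thesis using p NV by (simp add: phi_Node Sstar_def)
        next
          case T then show ?thesis using H1[OF T(2) T(4) T(5)] p NV by simp
        next
          case H then show ?thesis using H2[OF H(2) H(4) H(5)] p NV by simp
        qed
      qed
      moreover have "z \<in> vstar V E v \<epsilon>" using N NV unfolding vstar_def by simp
      ultimately show ?thesis by (rule witness'[OF DB_vstar[OF v \<epsilon>]])
    next
      case (NE \<omega>)
      have w: "\<omega> \<in> ends V E" using N NE unfolding nodes_def by auto
      have "\<forall>z'\<in>hatC V E X0 \<omega> \<epsilon>. phi E P z' \<in> Sstar E P p \<epsilon>" using hatC_sub[OF w] p NE by simp
      moreover have "z \<in> hatC V E X0 \<omega> \<epsilon>" using N NE w unfolding hatC_def Let_def node_in_def by simp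
      ultimately show ?thesis by (rule witness'[OF DB_hatC[OF X0 w \<epsilon>]])
    qed
  next
    case I
    have eq: "nc x = p" "nc y = p" using ph I by (auto simp: phi_Inner split: if_splits)
    from I(2) show ?thesis
    proof (cases rule: all_edges_cases)
      case (R u w)
      let ?B = "{Inner (NV u, NV w) s | s. 0 < s \<and> s < 1}"
      have "?B \<in> DBasis V E" using DB_int[OF R(3)] by simp
      moreover have "z \<in> ?B" using I R by simp
      moreover have "\<forall>z'\<in>?B. phi E P z' \<in> Sstar E P p \<epsilon>"
      proof
        fix z' assume "z' \<in> ?B"
        then obtain s where zs: "z' = Inner (NV u, NV w) s" by blast
        have e1: "nc (NV u) = p" using eq(1) unfolding R(1) .
        have e2: "nc (NV w) = p" using eq(2) unfolding R(2) .
        show "phi E P z' \<in> Sstar E P p \<epsilon>" unfolding zs by (rule H0[OF e1 e2])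
      qed
      ultimately show ?thesis by (rule witness)
    next
      case L
      then show ?thesis
      proof (cases rule: limit_cases)
        case (EE \<omega> \<eta>)
        show ?thesis
        proof (cases "compE V E X0 \<omega> = compE V E X0 \<eta>")
          case True
          have "z \<in> hatC V E X0 \<omega> \<epsilon>"
          proof -
            have "Inner (x,y) t \<in> {Inner e t | e t. e \<in> all_edges V E \<and> node_in V E X0 (compE V E X0 \<omega>) (fst e)
                \<and> node_in V E X0 (compE V E X0 \<omega>) (snd e) \<and> 0 < t \<and> t < 1}"
              using I EE True unfolding node_in_def by auto
            then show ?thesis using I unfolding hatC_def Let_def by blast
          qed
          moreover have "\<forall>z'\<in>hatC V E X0 \<omega> \<epsilon>. phi E P z' \<in> Sstar E P p \<epsilon>" using hatC_sub[OF EE(3)] eq EE by simp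
          ultimately show ?thesis by (rule witness[OF DB_hatC[OF X0 EE(3) \<epsilon>]])
        next
          case False
          let ?B = "band V E (node_in V E X0 (compE V E X0 \<omega>)) (node_in V E X0 (compE V E X0 \<eta>)) t 1"
          have "?B \<in> DBasis V E" using DB_band1[OF _ X0 False I(3,4)] L EE by simp
          moreover have "z \<in> ?B" using I EE unfolding band_def node_in_def by auto
          moreover have "\<forall>z'\<in>?B. phi E P z' \<in> Sstar E P p \<epsilon>"
          proof
            fix z' assume "z' \<in> ?B"
            then obtain x' y' s where z': "z' = Inner (x',y') s" "node_in V E X0 (compE V E X0 \<omega>) x'"
               "node_in V E X0 (compE V E X0 \<eta>) y'" unfolding band_def by auto
            have "nc x' = p" using node_in_nc[OF X0f EE(3) z'(2)] eq EE by simp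
            moreover have "nc y' = p" using node_in_nc[OF X0f EE(4) z'(3)] eq EE by simp
            ultimately show "phi E P z' \<in> Sstar E P p \<epsilon>" using H0 z'(1) by simp
          qed
          ultimately show ?thesis by (rule witness)
        qed
      next
        case (VE v \<omega>)
        let ?X = "insert v X0"
        have X: "?X \<in> fsets V" "X0 \<subseteq> ?X" using X0 VE(3) unfolding fsets_def by auto
        let ?B = "band V E (\<lambda>x. x = NV v) (node_in V E ?X (compE V E ?X \<omega>)) t 1"
        have "?B \<in> DBasis V E" using DB_band2[OF _ X(1) insertI1 I(3,4)] L VE by simp
        moreover have "z \<in> ?B" using I VE unfolding band_def node_in_def by auto
        moreover have "\<forall>z'\<in>?B. phi E P z' \<in> Sstar E P p \<epsilon>"
        proof
          fix z' assume "z' \<in> ?B"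
          then obtain x' y' s where z': "z' = Inner (x',y') s" "x' = NV v"
             "node_in V E ?X (compE V E ?X \<omega>) y'" unfolding band_def by auto
          have "nc x' = p" using eq VE z'(2) by simp
          moreover have "nc y' = p" using node_in_nc[OF X VE(4) z'(3)] eq VE by simp
          ultimately show "phi E P z' \<in> Sstar E P p \<epsilon>" using H0 z'(1) by simp
        qed
        ultimately show ?thesis by (rule witness)
      next
        case (EV v \<omega>)
        let ?X = "insert v X0"
        have X: "?X \<in> fsets V" "X0 \<subseteq> ?X" using X0 EV(3) unfolding fsets_def by auto
        let ?B = "band V E (node_in V E ?X (compE V E ?X \<omega>)) (\<lambda>x. x = NV v) t 1"
        have "?B \<in> DBasis V E" using DB_band3[OF _ X(1) insertI1 I(3,4)] L EV by simp
        moreover have "z \<in> ?B" using I EV unfolding band_def node_in_def by auto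
        moreover have "\<forall>z'\<in>?B. phi E P z' \<in> Sstar E P p \<epsilon>"
        proof
          fix z' assume "z' \<in> ?B"
          then obtain x' y' s where z': "z' = Inner (x',y') s" "y' = NV v"
             "node_in V E ?X (compE V E ?X \<omega>) x'" unfolding band_def by auto
          have "nc y' = p" using eq EV z'(2) by simp
          moreover have "nc x' = p" using node_in_nc[OF X EV(4) z'(3)] eq EV by simp
          ultimately show "phi E P z' \<in> Sstar E P p \<epsilon>" using H0 z'(1) by simp
        qed
        ultimately show ?thesis by (rule witness)
      qed
    qed
  qed
qed

lemma Q_nbhd:
  assumes U: "U \<in> QBasis E P" and q: "QI q t \<in> U"
  shows "\<exists>\<delta>>0. \<forall>s. \<bar>s - t\<bar> < \<delta> \<and> 0 < s \<and> s < 1 \<longrightarrow> QI q s \<in> U"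
  using U
proof (cases rule: QBasis_cases)
  case A
  then have "q \<in> qedges E P" using q unfolding QPoints_def by auto
  then show ?thesis using A unfolding QPoints_def by (intro exI[of _ 1]) auto
next
  case (S p \<epsilon>)
  from q S consider (a) "q \<in> qedges E P" "qtail P q = p" "0 < t" "t < \<epsilon>"
    | (b) "q \<in> qedges E P" "qhead P q = p" "1 - \<epsilon> < t" "t < 1"
    unfolding Sstar_def by auto
  then show ?thesis
  proof cases
    case a
    have "QI q s \<in> U" if "\<bar>s - t\<bar> < \<epsilon> - t" "0 < s" "s < 1" for s
    proof -
      have "s < \<epsilon>" using that(1) by (simp add: abs_less_iff)
      then show ?thesis using a that S unfolding Sstar_def by blast
    qed
    then show ?thesis using a by (intro exI[of _ "\<epsilon> - t"]) auto
  next
    case b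
    have "QI q s \<in> U" if "\<bar>s - t\<bar> < t - (1 - \<epsilon>)" "0 < s" "s < 1" for s
    proof -
      have "1 - \<epsilon> < s" using that(1) by (simp add: abs_less_iff)
      then show ?thesis using b that S unfolding Sstar_def by blast
    qed
    then show ?thesis using b by (intro exI[of _ "t - (1 - \<epsilon>)"]) auto
  qed
next
  case (I e a b)
  then have h: "q = e" "a < t" "t < b" using q by auto
  have "QI q s \<in> U" if "\<bar>s - t\<bar> < min (t - a) (b - t)" for s
  proof -
    have "a < s" "s < b" using that by (auto simp: abs_less_iff)
    then show ?thesis using I h by blast
  qed
  then show ?thesis using h by (intro exI[of _ "min (t - a) (b - t)"]) auto
qed

lemma J:
  assumes "nc x' = nc x" "nc y' = nc y" "nc x \<noteq> nc y" "infinite (edges_between E (nc x) (nc y))"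
  shows "phi E P (Inner (x',y') s) = QI (QQuot (nc x) (nc y)) s"
proof -
  have "qof E P x' y' = QQuot (nc x') (nc y')" using qof_inf assms by simp
  then show ?thesis using assms by (simp add: phi_Inner)
qed

lemma qi_nbhd:
  assumes z: "z \<in> DPoints V E" and ph: "phi E P z = QI q t" and \<delta>: "\<delta> > 0"
  shows "\<exists>B\<in>DBasis V E. z \<in> B \<and> (\<forall>z'\<in>B. \<exists>s. \<bar>s - t\<bar> < \<delta> \<and> 0 < s \<and> s < 1 \<and> phi E P z' = QI q s)"
proof -
  from z consider (N) x where "z = Node x" "x \<in> nodes V E"
    | (I) x y t' where "z = Inner (x,y) t'" "(x,y) \<in> all_edges V E" "0 < t'" "t' < 1"
    unfolding DPoints_def by auto
  then show ?thesis
  proof cases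
    case N then show ?thesis using ph by (simp add: phi_Node)
  next
    case I
    have ne: "nc x \<noteq> nc y" and qq: "q = qof E P x y" and tt: "t' = t"
      using ph I by (auto simp: phi_Inner split: if_splits)
    have t: "0 < t" "t < 1" using I tt by auto
    from I(2) show ?thesis
    proof (cases rule: all_edges_cases)
      case (R u w)
      let ?a = "max 0 (t - \<delta>)" and ?b = "min 1 (t + \<delta>)"
      let ?B = "{Inner (NV u, NV w) s | s. ?a < s \<and> s < ?b}"
      have ab: "0 \<le> ?a" "?a < ?b" "?b \<le> 1" using t \<delta> by auto
      have "?B \<in> DBasis V E" by (rule DB_int[OF R(3) ab])
      moreover have "z \<in> ?B" using I R t \<delta> tt by simp
      moreover have "\<forall>z'\<in>?B. \<exists>s. \<bar>s - t\<bar> < \<delta> \<and> 0 < s \<and> s < 1 \<and> phi E P z' = QI q s"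
      proof
        fix z' assume "z' \<in> ?B"
        then obtain s where zs: "z' = Inner (NV u, NV w) s" "?a < s" "s < ?b" by blast
        have ne': "nc (NV u) \<noteq> nc (NV w)" using ne unfolding R(1) R(2) .
        have "phi E P z' = QI q s" unfolding zs(1) qq R(1) R(2) phi_Inner using ne' by simp
        moreover have "\<bar>s - t\<bar> < \<delta>" "0 < s" "s < 1" using zs(2,3) by (auto simp: abs_less_iff)
        ultimately show "\<exists>s. \<bar>s - t\<bar> < \<delta> \<and> 0 < s \<and> s < 1 \<and> phi E P z' = QI q s" by blast
      qed
      ultimately show ?thesis by (rule witness)
    next
      case L
      have q2: "q = QQuot (nc x) (nc y)" using qof_lim[OF L ne] qq by simp
      have inf: "infinite (edges_between E (nc x) (nc y))" using limit_inf[OF L ne] .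
      have bandok: "\<exists>s. \<bar>s - t\<bar> < \<delta> \<and> 0 < s \<and> s < 1 \<and> phi E P z' = QI q s"
        if "z' \<in> band V E Pt Ph t \<delta>" "\<And>x'. Pt x' \<Longrightarrow> nc x' = nc x" "\<And>y'. Ph y' \<Longrightarrow> nc y' = nc y"
        for z' Pt Ph
      proof -
        from that(1) obtain x' y' s where zs: "z' = Inner (x',y') s" "Pt x'" "Ph y'" "\<bar>s - t\<bar> < \<delta>" "0 < s" "s < 1"
          unfolding band_def by auto
        have "phi E P z' = QI q s" unfolding zs(1) q2 using J[OF that(2)[OF zs(2)] that(3)[OF zs(3)] ne inf] .
        then show ?thesis using zs by blast
      qed
      from L show ?thesis
      proof (cases rule: limit_cases)
        case (EE \<omega> \<eta>)
        have False': "compE V E X0 \<omega> \<noteq> compE V E X0 \<eta>"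
        proof
          assume eq: "compE V E X0 \<omega> = compE V E X0 \<eta>"
          obtain c where c: "c \<in> compE V E X0 \<omega>" using scomps_sub(2)[OF compE_props(1)[OF EE(3) X0]] by auto
          have "c \<in> nc x" using ncE(2)[OF EE(3) X0f] c EE by auto
          moreover have "c \<in> nc y" using ncE(2)[OF EE(4) X0f] c eq EE by auto
          ultimately show False using P_disj ncE(1)[OF EE(3) X0f] ncE(1)[OF EE(4) X0f] ne EE by metis
        qed
        let ?B = "band V E (node_in V E X0 (compE V E X0 \<omega>)) (node_in V E X0 (compE V E X0 \<eta>)) t \<delta>"
        have "?B \<in> DBasis V E" using DB_band1[OF _ X0 False' t \<delta>] L EE by simp
        moreover have "z \<in> ?B" using I EE tt \<delta> unfolding band_def node_in_def by auto
        moreover have "\<forall>z'\<in>?B. \<exists>s. \<bar>s - t\<bar> < \<delta> \<and> 0 < s \<and> s < 1 \<and> phi E P z' = QI q s"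
        proof
          fix z' assume zB: "z' \<in> ?B"
          show "\<exists>s. \<bar>s - t\<bar> < \<delta> \<and> 0 < s \<and> s < 1 \<and> phi E P z' = QI q s"
          proof (rule bandok[OF zB])
            fix x' assume "node_in V E X0 (compE V E X0 \<omega>) x'"
            then show "nc x' = nc x" using node_in_nc[OF X0f EE(3)] EE by simp
          next
            fix y' assume "node_in V E X0 (compE V E X0 \<eta>) y'"
            then show "nc y' = nc y" using node_in_nc[OF X0f EE(4)] EE by simp
          qed
        qed
        ultimately show ?thesis by (rule witness)
      next
        case (VE v \<omega>)
        let ?X = "insert v X0"
        have X: "?X \<in> fsets V" "X0 \<subseteq> ?X" using X0 VE(3) unfolding fsets_def by auto
        let ?B = "band V E (\<lambda>x. x = NV v) (node_in V E ?X (compE V E ?X \<omega>)) t \<delta>"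
        have "?B \<in> DBasis V E" using DB_band2[OF _ X(1) insertI1 t \<delta>] L VE by simp
        moreover have "z \<in> ?B" using I VE tt \<delta> unfolding band_def node_in_def by auto
        moreover have "\<forall>z'\<in>?B. \<exists>s. \<bar>s - t\<bar> < \<delta> \<and> 0 < s \<and> s < 1 \<and> phi E P z' = QI q s"
        proof
          fix z' assume zB: "z' \<in> ?B"
          show "\<exists>s. \<bar>s - t\<bar> < \<delta> \<and> 0 < s \<and> s < 1 \<and> phi E P z' = QI q s"
          proof (rule bandok[OF zB])
            fix x' assume "x' = NV v"
            then show "nc x' = nc x" using VE by simp
          next
            fix y' assume "node_in V E ?X (compE V E ?X \<omega>) y'"
            then show "nc y' = nc y" using node_in_nc[OF X VE(4)] VE by simp
          qed
        qed
        ultimately show ?thesis by (rule witness)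
      next
        case (EV v \<omega>)
        let ?X = "insert v X0"
        have X: "?X \<in> fsets V" "X0 \<subseteq> ?X" using X0 EV(3) unfolding fsets_def by auto
        let ?B = "band V E (node_in V E ?X (compE V E ?X \<omega>)) (\<lambda>x. x = NV v) t \<delta>"
        have "?B \<in> DBasis V E" using DB_band3[OF _ X(1) insertI1 t \<delta>] L EV by simp
        moreover have "z \<in> ?B" using I EV tt \<delta> unfolding band_def node_in_def by auto
        moreover have "\<forall>z'\<in>?B. \<exists>s. \<bar>s - t\<bar> < \<delta> \<and> 0 < s \<and> s < 1 \<and> phi E P z' = QI q s"
        proof
          fix z' assume zB: "z' \<in> ?B"
          show "\<exists>s. \<bar>s - t\<bar> < \<delta> \<and> 0 < s \<and> s < 1 \<and> phi E P z' = QI q s"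
          proof (rule bandok[OF zB])
            fix x' assume "node_in V E ?X (compE V E ?X \<omega>) x'"
            then show "nc x' = nc x" using node_in_nc[OF X EV(4)] EV by simp
          next
            fix y' assume "y' = NV v"
            then show "nc y' = nc y" using EV by simp
          qed
        qed
        ultimately show ?thesis by (rule witness)
      qed
    qed
  qed
qed

lemma QP_in: "QPoints E P \<in> QBasis E P" unfolding QBasis_def by blast

lemma open_pre:
  assumes U: "U \<in> QBasis E P"
  shows "openin (topology_generated_by (DBasis V E)) (phi E P -` U \<inter> \<Union>(DBasis V E))"
proof -
  let ?W = "phi E P -` U \<inter> \<Union>(DBasis V E)"
  have key: "\<exists>B\<in>DBasis V E. z \<in> B \<and> B \<subseteq> ?W" if zW: "z \<in> ?W" for z
  proof -
    from zW obtain B0 where "B0 \<in> DBasis V E" "z \<in> B0" by blast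
    then have zD: "z \<in> DPoints V E" using DBasis_sub by blast
    have zU: "phi E P z \<in> U" using zW by blast
    have suff: "\<exists>B\<in>DBasis V E. z \<in> B \<and> (\<forall>z'\<in>B. phi E P z' \<in> U)"
    proof (cases "phi E P z")
      case (QV p)
      from U show ?thesis
      proof (cases rule: QBasis_cases)
        case A
        have "\<forall>z'\<in>DPoints V E. phi E P z' \<in> U" using A phi_DP by blast
        then show ?thesis by (rule witness'[OF DB_all _ zD])
      next
        case (S p' \<epsilon>)
        have "p' = p" using zU QV S unfolding Sstar_def by auto
        then show ?thesis using star_nbhd[OF zD QV S(2,3)] S by simp
      next
        case (I e a b) then show ?thesis using zU QV by auto
      qed
    next
      case (QI q t)
      obtain \<delta> where \<delta>: "\<delta> > 0" "\<And>s. \<bar>s - t\<bar> < \<delta> \<and> 0 < s \<and> s < 1 \<Longrightarrow> QI q s \<in> U"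
      proof -
        have "QI q t \<in> U" using zU QI by simp
        from Q_nbhd[OF U this] obtain \<delta> where "\<delta> > 0" "\<forall>s. \<bar>s - t\<bar> < \<delta> \<and> 0 < s \<and> s < 1 \<longrightarrow> QI q s \<in> U"
          by blast
        then show ?thesis using that by blast
      qed
      obtain B where B: "B \<in> DBasis V E" "z \<in> B"
        "\<forall>z'\<in>B. \<exists>s. \<bar>s - t\<bar> < \<delta> \<and> 0 < s \<and> s < 1 \<and> phi E P z' = QI q s"
        using qi_nbhd[OF zD QI \<delta>(1)] by blast
      have "\<forall>z'\<in>B. phi E P z' \<in> U"
      proof
        fix z' assume "z' \<in> B"
        then obtain s where "\<bar>s - t\<bar> < \<delta> \<and> 0 < s \<and> s < 1" "phi E P z' = QI q s" using B(3) by blast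
        then show "phi E P z' \<in> U" using \<delta>(2) by simp
      qed
      then show ?thesis by (rule witness'[OF B(1) _ B(2)])
    qed
    then obtain B where "B \<in> DBasis V E" "z \<in> B" "\<forall>z'\<in>B. phi E P z' \<in> U" by blast
    then have "B \<subseteq> ?W" by blast
    then show ?thesis using \<open>B \<in> DBasis V E\<close> \<open>z \<in> B\<close> by blast
  qed
  have eq: "?W = \<Union>{B\<in>DBasis V E. B \<subseteq> ?W}"
  proof
    show "?W \<subseteq> \<Union>{B\<in>DBasis V E. B \<subseteq> ?W}"
    proof
      fix z assume "z \<in> ?W"
      from key[OF this] obtain B where "B \<in> DBasis V E" "z \<in> B" "B \<subseteq> ?W" by blast
      then show "z \<in> \<Union>{B\<in>DBasis V E. B \<subseteq> ?W}" by blast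
    qed
  qed blast
  have "generate_topology_on (DBasis V E) (\<Union>{B\<in>DBasis V E. B \<subseteq> ?W})"
    by (rule generate_topology_on.UN) (auto intro: generate_topology_on.Basis)
  then have "generate_topology_on (DBasis V E) ?W" using eq by simp
  then show ?thesis by (simp add: openin_topology_generated_by_iff)
qed

lemma cont: "continuous_map (DTop V E) (QTop E P) (phi E P)"
  unfolding DTop_def QTop_def
proof (rule continuous_on_generated_topo)
  fix U assume "U \<in> QBasis E P"
  then show "openin (topology_generated_by (DBasis V E))
      (phi E P -` U \<inter> topspace (topology_generated_by (DBasis V E)))"
    using open_pre by simp
next
  show "phi E P ` topspace (topology_generated_by (DBasis V E)) \<subseteq> \<Union>(QBasis E P)"
  proof
    fix y assume "y \<in> phi E P ` topspace (topology_generated_by (DBasis V E))"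
    then obtain z B where "B \<in> DBasis V E" "z \<in> B" "y = phi E P z" by auto
    then have "y \<in> QPoints E P" using DBasis_sub phi_DP by blast
    then show "y \<in> \<Union>(QBasis E P)" using QP_in by blast
  qed
qed

end

lemma exists_X0:
  assumes "admissible V E P"
  shows "\<exists>X0\<in>fsets V. \<forall>p q. p \<in> P \<longrightarrow> q \<in> P \<longrightarrow> p \<noteq> q \<longrightarrow> (\<exists>Y. Y \<subseteq> X0 \<and> separates V E Y p q)"
proof -
  have fin: "finite P" and h: "\<forall>p\<in>P. \<forall>q\<in>P. p \<noteq> q \<longrightarrow> (\<exists>Y\<in>fsets V. separates V E Y p q)"
    using assms unfolding admissible_def by auto
  let ?I = "{pq \<in> P \<times> P. fst pq \<noteq> snd pq}"
  have "\<forall>pq\<in>?I. \<exists>Y. Y \<in> fsets V \<and> separates V E Y (fst pq) (snd pq)"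
  proof
    fix pq assume "pq \<in> ?I"
    then have "fst pq \<in> P" "snd pq \<in> P" "fst pq \<noteq> snd pq" by auto
    then have "\<exists>Y\<in>fsets V. separates V E Y (fst pq) (snd pq)" using h by blast
    then show "\<exists>Y. Y \<in> fsets V \<and> separates V E Y (fst pq) (snd pq)" by blast
  qed
  from bchoice[OF this] obtain f where f: "\<forall>pq\<in>?I. f pq \<in> fsets V \<and> separates V E (f pq) (fst pq) (snd pq)"
    by blast
  let ?X = "\<Union>(f ` ?I)"
  have "finite ?I" using fin by auto
  then have fI: "finite (f ` ?I)" by (rule finite_imageI)
  have fY: "\<forall>Y\<in>f ` ?I. finite Y" using f unfolding fsets_def by blast
  have "finite ?X" using finite_Union[OF fI] fY by blast
  moreover have "?X \<subseteq> V" using f unfolding fsets_def by blast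
  ultimately have X: "?X \<in> fsets V" unfolding fsets_def by simp
  have "\<forall>p q. p \<in> P \<longrightarrow> q \<in> P \<longrightarrow> p \<noteq> q \<longrightarrow> (\<exists>Y. Y \<subseteq> ?X \<and> separates V E Y p q)"
  proof (intro allI impI)
    fix p q assume "p \<in> P" "q \<in> P" "p \<noteq> q"
    then have pq: "(p,q) \<in> ?I" unfolding mem_Collect_eq mem_Sigma_iff fst_conv snd_conv by blast
    have "f (p,q) \<in> fsets V \<and> separates V E (f (p,q)) (fst (p,q)) (snd (p,q))" using bspec[OF f pq] .
    then have "separates V E (f (p,q)) p q" by simp
    moreover have "f (p,q) \<subseteq> ?X" using pq by blast
    ultimately show "\<exists>Y. Y \<subseteq> ?X \<and> separates V E Y p q" by blast
  qed
  with X show ?thesis by blast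
qed

theorem lemma4p2:
  fixes V :: "'v set" and E :: "('v \<times> 'v) set" and P :: "'v set set"
  assumes "digraph V E"
    and "admissible V E P"
  shows "continuous_map (DTop V E) (QTop E P) (phi E P)"
proof -
  obtain X0 where X0: "X0 \<in> fsets V"
    and s: "\<forall>p q. p \<in> P \<longrightarrow> q \<in> P \<longrightarrow> p \<noteq> q \<longrightarrow> (\<exists>Y. Y \<subseteq> X0 \<and> separates V E Y p q)"
    using exists_X0[OF assms(2)] by blast
  interpret qsetup V E P X0
    using assms X0 s by unfold_locales auto
  show ?thesis by (rule cont)
qed

end
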